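(* Let $n\ge 3$ and let $\lambda,\mu$ be integers with $1\le \mu\le \lambda$ and $\lambda+\mu\le n-1$. Let $K_n^{-}(\lambda,\mu)$ denote the graph obtained from the complete graph $K_n$ by removing all edges of a subgraph isomorphic to the complete bipartite graph $K_{\lambda,\mu}$. Then $$\dim_l(K_n^{-}(\lambda,\mu))=\begin{cases} n-2, & \mu=1,\\ n-3, & \mu\ge 2.\end{cases}$$
   Context: All graphs are finite, simple and connected. For vertices $x,y$ of a graph $G$, $d_G(x,y)$ is the length of a shortest $x,y$-path. A vertex $w$ distinguishes vertices $u,v$ if $d_G(u,w)\neq d_G(v,w)$. A set $W\subseteq V(G)$ is a local resolving set of $G$ if for every pair of adjacent vertices $u,v\in V(G)\setminus W$ some vertex of $W$ distinguishes $u$ and $v$. The local metric dimension $\dim_l(G)$ is the minimum cardinality of a local resolving set of $G$. The graph $K_n^{-}(\lambda,\mu)$ does not depend (up to isomorphism) on the choice of the removed $K_{\lambda,\mu}$. *)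

theory Defs
  imports Main
begin

text \<open>A simple graph is given by a vertex set V and a symmetric irreflexive
adjacency relation E (edges only between vertices of V).\<close>

definition walk :: "('a \<Rightarrow> 'a \<Rightarrow> bool) \<Rightarrow> 'a set \<Rightarrow> 'a list \<Rightarrow> bool" where
  "walk E V xs \<longleftrightarrow> xs \<noteq> [] \<and> set xs \<subseteq> V \<and>
     (\<forall>i. Suc i < length xs \<longrightarrow> E (xs ! i) (xs ! Suc i))"

definition gdist :: "('a \<Rightarrow> 'a \<Rightarrow> bool) \<Rightarrow> 'a set \<Rightarrow> 'a \<Rightarrow> 'a \<Rightarrow> nat" where
  "gdist E V x y = (LEAST k. \<exists>xs. walk E V xs \<and> hd xs = x \<and> last xs = y \<and> length xs = Suc k)"

definition local_resolving_set :: "('a \<Rightarrow> 'a \<Rightarrow> bool) \<Rightarrow> 'a set \<Rightarrow> 'a set \<Rightarrow> bool" where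
  "local_resolving_set E V W \<longleftrightarrow> W \<subseteq> V \<and>
     (\<forall>u\<in>V - W. \<forall>v\<in>V - W. E u v \<longrightarrow> (\<exists>w\<in>W. gdist E V u w \<noteq> gdist E V v w))"

definition local_metric_dim :: "('a \<Rightarrow> 'a \<Rightarrow> bool) \<Rightarrow> 'a set \<Rightarrow> nat" where
  "local_metric_dim E V = (LEAST k. \<exists>W. local_resolving_set E V W \<and> card W = k)"

definition Kn_minus :: "'a set \<Rightarrow> 'a set \<Rightarrow> 'a set \<Rightarrow> 'a \<Rightarrow> 'a \<Rightarrow> bool" where
  "Kn_minus V A B u v \<longleftrightarrow> u \<in> V \<and> v \<in> V \<and> u \<noteq> v \<and>
     \<not> ((u \<in> A \<and> v \<in> B) \<or> (u \<in> B \<and> v \<in> A))"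

end

theory Submission
  imports Defs
begin

lemma len1_hd_last: "length xs = Suc 0 \<Longrightarrow> hd xs = last xs"
  by (cases xs) auto

lemma len2_edge: "walk E V xs \<Longrightarrow> length xs = Suc (Suc 0) \<Longrightarrow> E (hd xs) (last xs)"
proof -
  assume w: "walk E V xs" and l: "length xs = Suc (Suc 0)"
  then obtain p q where xs: "xs = [p, q]"
    by (metis One_nat_def Suc_length_conv length_0_conv)
  from w have "E (xs ! 0) (xs ! Suc 0)" unfolding walk_def using l by auto
  then show ?thesis using xs by simp
qed

lemma gdist_1:
  assumes "E x y" "x \<in> V" "y \<in> V" "x \<noteq> y"
  shows "gdist E V x y = 1"
  unfolding gdist_def
proof (rule Least_equality)
  have "walk E V [x, y]" unfolding walk_def using assms
    by (auto simp: less_Suc_eq)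
  then show "\<exists>xs. walk E V xs \<and> hd xs = x \<and> last xs = y \<and> length xs = Suc 1" by force
next
  fix k assume "\<exists>xs. walk E V xs \<and> hd xs = x \<and> last xs = y \<and> length xs = Suc k"
  then obtain xs where "walk E V xs" "hd xs = x" "last xs = y" "length xs = Suc k" by blast
  then show "1 \<le> k" using len1_hd_last[of xs] assms(4) by (cases k) auto
qed

lemma gdist_2:
  assumes "\<not> E x y" "x \<in> V" "y \<in> V" "x \<noteq> y" "c \<in> V" "E x c" "E c y"
  shows "gdist E V x y = 2"
  unfolding gdist_def
proof (rule Least_equality)
  have "walk E V [x, c, y]" unfolding walk_def using assms
    by (auto simp: less_Suc_eq)
  then show "\<exists>xs. walk E V xs \<and> hd xs = x \<and> last xs = y \<and> length xs = Suc 2" by force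
next
  fix k assume "\<exists>xs. walk E V xs \<and> hd xs = x \<and> last xs = y \<and> length xs = Suc k"
  then obtain xs where "walk E V xs" "hd xs = x" "last xs = y" "length xs = Suc k" by blast
  then show "2 \<le> k" using len1_hd_last[of xs] len2_edge[of E V xs] assms(1,4)
    by (cases k; cases "k - 1") auto
qed

lemma gdist_K:
  assumes "x \<in> V" "y \<in> V" "x \<noteq> y" "c \<in> V" "c \<notin> A" "c \<notin> B"
  shows "gdist (Kn_minus V A B) V x y = (if Kn_minus V A B x y then 1 else 2)"
proof (cases "Kn_minus V A B x y")
  case True then show ?thesis using gdist_1 assms by auto
next
  case False
  then have "x \<noteq> c" "y \<noteq> c" using assms unfolding Kn_minus_def by auto
  then show ?thesis using False gdist_2[of "Kn_minus V A B" x y V c] assms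
    unfolding Kn_minus_def by auto
qed

lemma lrs_char:
  assumes "c \<in> V" "c \<notin> A" "c \<notin> B"
  shows "local_resolving_set (Kn_minus V A B) V W \<longleftrightarrow> W \<subseteq> V \<and>
     (\<forall>u\<in>V - W. \<forall>v\<in>V - W. Kn_minus V A B u v \<longrightarrow>
        (\<exists>w\<in>W. Kn_minus V A B u w \<noteq> Kn_minus V A B v w))"
proof -
  have eq: "gdist (Kn_minus V A B) V u w \<noteq> gdist (Kn_minus V A B) V v w \<longleftrightarrow>
            Kn_minus V A B u w \<noteq> Kn_minus V A B v w"
    if "u \<in> V - W" "v \<in> V - W" "w \<in> W" "W \<subseteq> V" for u v w
  proof -
    have "u \<noteq> w" "v \<noteq> w" "w \<in> V" using that by auto
    then show ?thesis using gdist_K[of u V w c A B] gdist_K[of v V w c A B] that assms by auto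
  qed
  show ?thesis unfolding local_resolving_set_def
    using eq by (auto; meson)
qed


lemma lower:
  assumes fin: "finite V" and c: "c \<in> V" "c \<notin> A" "c \<notin> B"
    and lrs: "local_resolving_set (Kn_minus V A B) V W" and dj: "A \<inter> B = {}"
  shows "card (V - W) \<le> 3" and "card B = 1 \<Longrightarrow> card (V - W) \<le> 2"
proof -
  let ?E = "Kn_minus V A B"
  let ?U = "V - W"
  let ?C = "V - A - B"
  have W: "W \<subseteq> V" and R: "\<And>u v. u \<in> ?U \<Longrightarrow> v \<in> ?U \<Longrightarrow> ?E u v \<Longrightarrow>
        \<exists>w\<in>W. ?E u w \<noteq> ?E v w"
    using lrs lrs_char[OF c] by auto
  have twin: "u = v" if tw: "u \<in> ?U \<inter> S" "v \<in> ?U \<inter> S" "S = A \<or> S = B \<or> S = ?C" for u v S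
  proof (rule ccontr)
    assume ne: "u \<noteq> v"
    have "?E u v" using that ne dj unfolding Kn_minus_def by auto
    moreover have "u \<in> ?U" "v \<in> ?U" using tw by auto
    ultimately obtain w where w: "w \<in> W" "?E u w \<noteq> ?E v w" using R by blast
    have "w \<in> V" "w \<noteq> u" "w \<noteq> v" using w W tw by auto
    note wf = this
    have uvV: "u \<in> V" "v \<in> V" using tw by auto
    have "?E u w = ?E v w"
      using tw(3)
    proof (elim disjE)
      assume "S = A" then have "u \<in> A" "v \<in> A" "u \<notin> B" "v \<notin> B" using tw dj by auto
      then show ?thesis using wf uvV unfolding Kn_minus_def by blast
    next
      assume "S = B" then have "u \<in> B" "v \<in> B" "u \<notin> A" "v \<notin> A" using tw dj by auto
      then show ?thesis using wf uvV unfolding Kn_minus_def by blast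
    next
      assume "S = ?C" then have "u \<notin> B" "v \<notin> B" "u \<notin> A" "v \<notin> A" using tw dj by auto
      then show ?thesis using wf uvV unfolding Kn_minus_def by blast
    qed
    then show False using w(2) by blast
  qed
  have f: "finite (?U \<inter> S)" for S using fin by auto
  have c1: "card (?U \<inter> S) \<le> 1" if "S = A \<or> S = B \<or> S = ?C" for S
    using card_le_Suc0_iff_eq[OF f[of S]] twin[of _ S] that by auto
  define X where "X = ?U \<inter> A"
  define Y where "Y = ?U \<inter> B"
  define Z where "Z = ?U \<inter> ?C"
  have U: "?U = X \<union> Y \<union> Z" unfolding X_def Y_def Z_def by blast
  have "card ?U \<le> card (X \<union> Y) + card Z" unfolding U by (rule card_Un_le)
  moreover have "card (X \<union> Y) \<le> card X + card Y" by (rule card_Un_le)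
  ultimately have cs: "card ?U \<le> card (?U \<inter> A) + card (?U \<inter> B) + card (?U \<inter> ?C)"
    unfolding X_def Y_def Z_def by linarith
  then show "card ?U \<le> 3" using c1[of A] c1[of B] c1[of ?C] by auto
  assume B1: "card B = 1"
  have "?U \<inter> A = {} \<or> ?U \<inter> B = {} \<or> ?U \<inter> ?C = {}"
  proof (rule ccontr)
    assume "\<not> ?thesis"
    then obtain a b d where abd: "a \<in> ?U \<inter> A" "b \<in> ?U \<inter> B" "d \<in> ?U \<inter> ?C" by blast
    obtain x where "B = {x}" using B1 card_1_singletonE by blast
    then have Bb: "B = {b}" using abd by blast
    have "?E a d" using abd c unfolding Kn_minus_def by auto
    then obtain w where "w \<in> W" "?E a w \<noteq> ?E d w" using R abd by blast
    then show False using abd Bb W dj unfolding Kn_minus_def by auto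
  qed
  then show "card ?U \<le> 2" using cs c1[of A] c1[of B] c1[of ?C] by auto
qed

theorem lemma2p1:
  fixes V A B :: "'a set" and n lam mu :: nat
  assumes "finite V" and "card V = n" and "n \<ge> 3"
    and "A \<subseteq> V" and "B \<subseteq> V" and "A \<inter> B = {}"
    and "card A = lam" and "card B = mu"
    and "1 \<le> mu" and "mu \<le> lam" and "lam + mu \<le> n - 1"
  shows "local_metric_dim (Kn_minus V A B) V = (if mu = 1 then n - 2 else n - 3)"
proof -
  let ?E = "Kn_minus V A B"
  have fA: "finite A" "finite B" using assms finite_subset by auto
  have "card (A \<union> B) = lam + mu" using card_Un_disjoint[OF fA] assms by auto
  then have "A \<union> B \<noteq> V" using assms by auto
  then obtain c where c: "c \<in> V" "c \<notin> A" "c \<notin> B" using assms by blast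
  obtain a where a: "a \<in> A" using assms fA by (metis card.empty ex_in_conv not_one_le_zero order_trans)
  obtain b where b: "b \<in> B" using assms fA by (metis card.empty ex_in_conv not_one_le_zero)
  have aV: "a \<in> V" "b \<in> V" using a b assms by auto
  have abc: "a \<noteq> b" "a \<noteq> c" "b \<noteq> c" using a b c assms by auto
  have low: "card W \<ge> (if mu = 1 then n - 2 else n - 3)"
    if "local_resolving_set ?E V W" for W
  proof -
    have WV: "W \<subseteq> V" using that unfolding local_resolving_set_def by auto
    have cd: "card (V - W) = n - card W" using card_Diff_subset[OF finite_subset[OF WV assms(1)] WV] assms by auto
    have cw: "card W \<le> n" using card_mono[OF assms(1) WV] assms by auto
    show ?thesis using lower[OF assms(1) c that assms(6)] cd cw assms by auto
  qed
  show ?thesis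
  proof (cases "mu = 1")
    case True
    let ?W = "V - {a, b}"
    have card: "card ?W = n - 2" using assms aV abc by (simp add: card_Diff_subset)
    have "local_resolving_set ?E V ?W"
      unfolding lrs_char[OF c]
    proof (intro conjI ballI impI)
      fix u v assume "u \<in> V - ?W" "v \<in> V - ?W" "?E u v"
      then show "\<exists>w\<in>?W. ?E u w \<noteq> ?E v w" using a b unfolding Kn_minus_def by auto
    qed auto
    then show ?thesis unfolding local_metric_dim_def using True card low
      by (intro Least_equality) auto
  next
    case False
    then have "card (B - {b}) \<ge> 1" using assms b fA by auto
    then obtain b' where b': "b' \<in> B" "b' \<noteq> b" by (metis Diff_iff card.empty ex_in_conv insertI1 not_one_le_zero)
    have "card (A - {a}) \<ge> 1" using assms a fA False by auto
    then obtain a' where a': "a' \<in> A" "a' \<noteq> a" by (metis Diff_iff card.empty ex_in_conv insertI1 not_one_le_zero)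
    let ?W = "V - {a, b, c}"
    have card: "card ?W = n - 3" using assms aV c abc by (simp add: card_Diff_subset)
    have "local_resolving_set ?E V ?W"
      unfolding lrs_char[OF c]
    proof (intro conjI ballI impI)
      fix u v assume uv: "u \<in> V - ?W" "v \<in> V - ?W" "?E u v"
      have a'W: "a' \<in> ?W" and b'W: "b' \<in> ?W" using a' b' a b assms(4,5,6) c by auto
      have "a \<notin> B" "b \<notin> A" "a' \<notin> B" "b' \<notin> A" using a b a' b' assms(6) by auto
      note nn = this
      have F: "\<not> ?E a b'" "?E c b'" "\<not> ?E b a'" "?E c a'" "\<not> ?E a b" "\<not> ?E b a"
        using nn a b c a' b' a'W b'W aV unfolding Kn_minus_def by blast+
      have uv3: "u \<in> {a,b,c}" "v \<in> {a,b,c}" using uv by auto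
      have "u \<noteq> v" using uv(3) unfolding Kn_minus_def by blast
      then have "?E u b' \<noteq> ?E v b' \<or> ?E u a' \<noteq> ?E v a'"
        using uv3 F uv(3) by auto
      then show "\<exists>w\<in>?W. ?E u w \<noteq> ?E v w" using a'W b'W by blast
    qed auto
    then show ?thesis unfolding local_metric_dim_def using False card low
      by (intro Least_equality) auto
  qed
qed

end
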